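(* Let $G$ be a finite simple graph of order $n$ whose adjacency matrix $A(G)$ is non-singular, and suppose $\bar d\le n-2\ln n-3$. Then $\mathcal{E}(G)\geq n-1+\bar{d}$, unless $G$ is isomorphic to the path $P_4$ or to the paw $H$.
   Context: For a finite simple graph $G$ with $n$ vertices and $m$ edges, $A(G)$ is its adjacency matrix with eigenvalues $\lambda_1\ge\cdots\ge\lambda_n$, and the energy is $\mathcal{E}(G)=\sum_{i=1}^n|\lambda_i|$. $G$ is non-singular if $A(G)$ is non-singular. $\bar d=2m/n$ is the average degree; $\ln$ is the natural logarithm. $P_4$ is the path on 4 vertices, and the paw $H$ is the graph on 4 vertices consisting of a triangle together with one extra vertex adjacent to exactly one vertex of the triangle. *)

theory Defs
  imports Complex_Main "Jordan_Normal_Form.Char_Poly" "Jordan_Normal_Form.Determinant"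
    "HOL-Computational_Algebra.Polynomial"
begin

definition simple_graph :: "nat \<Rightarrow> (nat \<Rightarrow> nat \<Rightarrow> bool) \<Rightarrow> bool" where
  "simple_graph n E \<longleftrightarrow> (\<forall>i<n. \<forall>j<n. E i j = E j i) \<and> (\<forall>i<n. \<not> E i i)"

definition adj_matrix :: "nat \<Rightarrow> (nat \<Rightarrow> nat \<Rightarrow> bool) \<Rightarrow> real mat" where
  "adj_matrix n E = mat n n (\<lambda>(i, j). if E i j then 1 else 0)"

definition num_edges :: "nat \<Rightarrow> (nat \<Rightarrow> nat \<Rightarrow> bool) \<Rightarrow> nat" where
  "num_edges n E = card {(i, j). i < j \<and> j < n \<and> E i j}"

definition avg_degree :: "nat \<Rightarrow> (nat \<Rightarrow> nat \<Rightarrow> bool) \<Rightarrow> real" where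
  "avg_degree n E = 2 * real (num_edges n E) / real n"

definition eigenvalues_mset :: "real mat \<Rightarrow> complex multiset" where
  "eigenvalues_mset A = proots (char_poly (map_mat complex_of_real A))"

definition graph_energy :: "nat \<Rightarrow> (nat \<Rightarrow> nat \<Rightarrow> bool) \<Rightarrow> real" where
  "graph_energy n E = sum_mset (image_mset cmod (eigenvalues_mset (adj_matrix n E)))"

definition graph_iso :: "nat \<Rightarrow> (nat \<Rightarrow> nat \<Rightarrow> bool) \<Rightarrow> nat \<Rightarrow> (nat \<Rightarrow> nat \<Rightarrow> bool) \<Rightarrow> bool" where
  "graph_iso n E n' E' \<longleftrightarrow>
     (\<exists>f. bij_betw f {0..<n} {0..<n'} \<and> (\<forall>i<n. \<forall>j<n. E i j \<longleftrightarrow> E' (f i) (f j)))"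

definition P4_edges :: "nat \<Rightarrow> nat \<Rightarrow> bool" where
  "P4_edges i j \<longleftrightarrow> {i, j} \<in> {{0, 1}, {1, 2}, {2, 3}}"

definition paw_edges :: "nat \<Rightarrow> nat \<Rightarrow> bool" where
  "paw_edges i j \<longleftrightarrow> {i, j} \<in> {{0, 1}, {1, 2}, {0, 2}, {0, 3}}"

end

theory Submission
  imports Defs "Jordan_Normal_Form.Schur_Decomposition"
begin


lemma ln_le_half:
  fixes u :: real assumes "1 \<le> u" shows "ln u \<le> (u - 1/u)/2"
proof -
  let ?f = "\<lambda>x::real. (x - 1/x)/2 - ln x"
  have "?f 1 \<le> ?f u"
  proof (rule DERIV_nonneg_imp_nondecreasing[OF assms])
    fix x :: real assume x1: "1 \<le> x" and x2: "x \<le> u"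
    hence xp: "x > 0" by auto
    have "DERIV ?f x :> ((1 + 1/x^2)/2 - 1/x)"
      using xp by (auto intro!: derivative_eq_intros simp: power2_eq_square field_simps)
    moreover have "(1 + 1/x^2)/2 - 1/x = (1 - 1/x)^2/2"
      using xp by (simp add: power2_eq_square field_simps)
    ultimately show "\<exists>y. DERIV ?f x :> y \<and> 0 \<le> y" by (intro exI[of _ "(1 - 1/x)^2/2"]) auto
  qed
  thus ?thesis by simp
qed

lemma ln_le_quad:
  fixes y :: real assumes "0 < y" "y \<le> 1" shows "ln y \<le> y - 1 - (y-1)^2/2"
proof -
  let ?f = "\<lambda>x::real. ln x - x + (x - 1)^2/2"
  have "?f y \<le> ?f 1"
  proof (rule DERIV_nonneg_imp_nondecreasing[OF assms(2)])
    fix x :: real assume x1: "y \<le> x" and x2: "x \<le> 1"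
    hence xp: "x > 0" using assms by auto
    have "DERIV ?f x :> (1/x - 1 + (x - 1))"
      using xp by (auto intro!: derivative_eq_intros simp: power2_eq_square field_simps)
    moreover have "1/x - 1 + (x - 1) = (x-1)^2/x"
      using xp by (simp add: power2_eq_square field_simps)
    moreover have "(x-1)^2/x \<ge> 0" using xp by simp
    ultimately show "\<exists>y. DERIV ?f x :> y \<and> 0 \<le> y" by metis
  qed
  thus ?thesis by simp
qed

lemma pointwise:
  fixes u y :: real assumes "1 \<le> u" "0 < y" "y \<le> u"
  shows "1 + ln y + (y-1)^2/(2*u) \<le> y"
proof (cases "y \<le> 1")
  case True
  have "(y-1)^2/(2*u) \<le> (y-1)^2/2"
    using assms by (intro divide_left_mono) auto
  with ln_le_quad[OF assms(2) True] show ?thesis by linarith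
next
  case False
  have "ln y \<le> (y - 1/y)/2" using False ln_le_half by auto
  also have "(y - 1/y)/2 = y - 1 - (y-1)^2/(2*y)" using assms by (simp add: field_simps power2_eq_square)
  finally have a: "ln y \<le> y - 1 - (y-1)^2/(2*y)" .
  have "(y-1)^2/(2*u) \<le> (y-1)^2/(2*y)"
    using assms False by (intro divide_left_mono) auto
  with a show ?thesis by linarith
qed




lemma e_lo: "exp (1::real) \<ge> 27/10"
proof -
  have "(27/10::real) \<le> (1 + 1/100)^100" by (simp add: power_divide divide_le_eq)
  also have "(1 + 1/100::real)^100 \<le> exp (1/100) ^ 100"
    by (intro power_mono) (use exp_ge_add_one_self[of "1/100::real"] in auto)
  also have "exp (1/100::real) ^ 100 = exp 1" by (simp flip: exp_of_nat_mult)
  finally show ?thesis .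
qed

lemma e_hi: "exp (1::real) \<le> 2724/1000"
proof -
  have "(1 - 1/256::real)^256 \<le> exp (-1/256) ^ 256"
    by (intro power_mono) (use exp_ge_add_one_self[of "-1/256::real"] in auto)
  also have "exp (-1/256::real) ^ 256 = exp (-1)" by (simp flip: exp_of_nat_mult)
  finally have a: "(255/256::real)^256 \<le> exp (-1)" by simp
  have "exp 1 = 1 / exp (-1::real)" by (simp add: exp_minus field_simps)
  also have "\<dots> \<le> 1 / (255/256::real)^256" using a by (intro divide_left_mono) auto
  also have "\<dots> \<le> 2724/1000" by (simp add: power_divide divide_le_eq)
  finally show ?thesis .
qed

lemma ln_upper:
  fixes x :: real and k m :: nat
  assumes "0 < x" "0 < k" "x ^ k \<le> exp 1 ^ m"
  shows "ln x \<le> real m / real k"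
proof -
  have "ln (x ^ k) \<le> ln (exp 1 ^ m)" using assms by (simp add: ln_le_cancel_iff del: exp_of_nat_mult)
  hence "real k * ln x \<le> real m" using assms by (simp add: ln_realpow del: exp_of_nat_mult)
  thus ?thesis using assms by (simp add: field_simps)
qed

lemma ln_lower:
  fixes x :: real and k m :: nat
  assumes "0 < x" "0 < k" "exp 1 ^ m \<le> x ^ k"
  shows "real m / real k \<le> ln x"
proof -
  have "ln (exp 1 ^ m) \<le> ln (x ^ k)" using assms by (simp add: ln_le_cancel_iff del: exp_of_nat_mult)
  hence "real m \<le> real k * ln x" using assms by (simp add: ln_realpow del: exp_of_nat_mult)
  thus ?thesis using assms by (simp add: field_simps)
qed

lemma epow_lo: "(27/10::real)^m \<le> exp 1 ^ m"
  using e_lo by (intro power_mono) auto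
lemma epow_hi: "exp 1 ^ m \<le> (2724/1000::real)^m"
  using e_hi by (intro power_mono) auto

lemma ln9: "ln (9::real) \<le> 9/4"
proof -
  have "(9::real)^4 \<le> exp 1 ^ 9"
  proof -
    have "(9::real)^4 \<le> (27/10::real)^9" by (simp add: power_divide le_divide_eq divide_le_eq)
    also have "\<dots> \<le> exp 1 ^ 9" by (rule epow_lo)
    finally show ?thesis .
  qed
  from ln_upper[OF _ _ this] show ?thesis by simp
qed
lemma ln11: "ln (11::real) \<le> 5/2"
proof -
  have "(11::real)^2 \<le> exp 1 ^ 5"
  proof -
    have "(11::real)^2 \<le> (27/10::real)^5" by (simp add: power_divide le_divide_eq divide_le_eq)
    also have "\<dots> \<le> exp 1 ^ 5" by (rule epow_lo)
    finally show ?thesis .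
  qed
  from ln_upper[OF _ _ this] show ?thesis by simp
qed
lemma ln19: "ln (19::real) \<le> 3"
proof -
  have "(19::real)^1 \<le> exp 1 ^ 3"
  proof -
    have "(19::real)^1 \<le> (27/10::real)^3" by (simp add: power_divide le_divide_eq divide_le_eq)
    also have "\<dots> \<le> exp 1 ^ 3" by (rule epow_lo)
    finally show ?thesis .
  qed
  from ln_upper[OF _ _ this] show ?thesis by simp
qed
lemma ln2_hi: "ln (2::real) \<le> 7/10"
proof -
  have "(2::real)^10 \<le> exp 1 ^ 7"
  proof -
    have "(2::real)^10 \<le> (27/10::real)^7" by (simp add: power_divide le_divide_eq divide_le_eq)
    also have "\<dots> \<le> exp 1 ^ 7" by (rule epow_lo)
    finally show ?thesis .
  qed
  from ln_upper[OF _ _ this] show ?thesis by simp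
qed
lemma ln2_lo: "69/100 \<le> ln (2::real)"
proof -
  have "exp 1 ^ 69 \<le> (2::real)^100"
  proof -
    have "exp 1 ^ 69 \<le> (2724/1000::real)^69" by (rule epow_hi)
    also have "\<dots> \<le> (2::real)^100" by (simp add: power_divide le_divide_eq divide_le_eq)
    finally show ?thesis .
  qed
  from ln_lower[OF _ _ this] show ?thesis by simp
qed
lemma ln5: "1/2 \<le> ln (5::real)"
proof -
  have "exp 1 ^ 1 \<le> (5::real)^2"
  proof -
    have "exp 1 ^ 1 \<le> (2724/1000::real)^1" by (rule epow_hi)
    also have "\<dots> \<le> (5::real)^2" by (simp add: power_divide le_divide_eq divide_le_eq)
    finally show ?thesis .
  qed
  from ln_lower[OF _ _ this] show ?thesis by simp
qed
lemma ln6: "1 \<le> ln (6::real)"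
proof -
  have "exp 1 ^ 1 \<le> (6::real)^1"
  proof -
    have "exp 1 ^ 1 \<le> (2724/1000::real)^1" by (rule epow_hi)
    also have "\<dots> \<le> (6::real)^1" by (simp add: power_divide le_divide_eq divide_le_eq)
    finally show ?thesis .
  qed
  from ln_lower[OF _ _ this] show ?thesis by simp
qed
lemma ln7: "3/2 \<le> ln (7::real)"
proof -
  have "exp 1 ^ 3 \<le> (7::real)^2"
  proof -
    have "exp 1 ^ 3 \<le> (2724/1000::real)^3" by (rule epow_hi)
    also have "\<dots> \<le> (7::real)^2" by (simp add: power_divide le_divide_eq divide_le_eq)
    finally show ?thesis .
  qed
  from ln_lower[OF _ _ this] show ?thesis by simp
qed
lemma ln8: "2 \<le> ln (8::real)"
proof -
  have "exp 1 ^ 2 \<le> (8::real)^1"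
  proof -
    have "exp 1 ^ 2 \<le> (2724/1000::real)^2" by (rule epow_hi)
    also have "\<dots> \<le> (8::real)^1" by (simp add: power_divide le_divide_eq divide_le_eq)
    finally show ?thesis .
  qed
  from ln_lower[OF _ _ this] show ?thesis by simp
qed




lemma diffL: fixes n t L :: real
  assumes "0 \<le> n" "69/100 \<le> L" "L \<le> 7/10" "2*n - 2*t - 10 - L - 69/100 \<ge> 0"
  shows "(n-4)*((n-2)*(n-2*t-3) - (n-1)) - n*(n-t-5-L)^2 \<ge>
     138/100*n^2 + 62/100*n*t - 13761/10000*n - n*t^2 - 16*t - 28"
proof -
  have h: "0 \<le> n * ((L - 69/100)*(2*n-2*t-10-L-69/100))"
    using assms by (intro mult_nonneg_nonneg) auto
  have e: "(n-4)*((n-2)*(n-2*t-3) - (n-1)) - n*(n-t-5-L)^2 - (138/100*n^2 + 62/100*n*t - 13761/10000*n - n*t^2 - 16*t - 28)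
      = n * ((L - 69/100)*(2*n-2*t-10-L-69/100))"
    by (simp add: field_simps power2_eq_square)
  show ?thesis using h e by linarith
qed

lemma F1T: fixes n t T :: real
  assumes "0 \<le> n" "0 \<le> t" "t \<le> T" "62/100 \<le> T"
  shows "138/100*n^2 + 62/100*n*t - 13761/10000*n - n*t^2 - 16*t - 28 \<ge>
         n*(138/100*n - 13761/10000 - (T - 62/100)*T) - 16*T - 28"
proof -
  define P where "P = n * ((T - t) * (t + T - 62/100))"
  have h: "0 \<le> P" unfolding P_def using assms by (intro mult_nonneg_nonneg) auto
  have e: "138/100*n^2 + 62/100*n*t - 13761/10000*n - n*t^2 - 16*t - 28 - (n*(138/100*n - 13761/10000 - (T - 62/100)*T) - 16*T - 28)
     = P + 16*(T - t)" unfolding P_def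
    by (simp add: field_simps power2_eq_square)
  have "0 \<le> 138/100*n^2 + 62/100*n*t - 13761/10000*n - n*t^2 - 16*t - 28 - (n*(138/100*n - 13761/10000 - (T - 62/100)*T) - 16*T - 28)"
    unfolding e using h assms by (intro add_nonneg_nonneg) auto
  thus ?thesis by (simp only: diff_ge_0_iff_ge)
qed




lemma ln_le_sqrt: fixes x :: real assumes "1 \<le> x" shows "ln x \<le> sqrt x"
proof -
  have s1: "1 \<le> sqrt x" using assms by simp
  have "ln (sqrt x) \<le> (sqrt x - 1/sqrt x)/2" by (rule ln_le_half[OF s1])
  also have "\<dots> \<le> sqrt x / 2" using s1 by simp
  finally show ?thesis using assms ln_sqrt[of x] by simp
qed

lemma chain3: "(a::real) \<ge> b - k \<Longrightarrow> b \<ge> c \<Longrightarrow> c \<ge> k \<Longrightarrow> 0 \<le> a" by linarith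

lemma diff_nonneg:
  fixes n :: nat assumes "9 \<le> n"
  shows "(real n-4)*((real n-2)*(real n-2*ln (real n)-3) - (real n-1)) - real n*(real n-ln (real n)-5-ln 2)^2 \<ge> 0"
proof -
  define t where "t = ln (real n)"
  define L where "L = ln (2::real)"
  have L1: "69/100 \<le> L" "L \<le> 7/10" using ln2_lo ln2_hi unfolding L_def by auto
  have t0: "0 \<le> t" unfolding t_def using assms by simp
  have mono: "t \<le> ln b" if "real n \<le> b" for b :: real
    unfolding t_def using that assms by simp
  define F where "F = 138/100*(real n)^2 + 62/100*real n*t - 13761/10000*real n - real n*t^2 - 16*t - 28"
  have key: "t \<le> real n / 4 \<and> F \<ge> 0"
  proof (cases "n \<ge> 20")
    case True
    have "t \<le> sqrt (real n)" unfolding t_def using assms by (intro ln_le_sqrt) simp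
    have s4: "4 \<le> sqrt (real n)" using True real_le_rsqrt[of 4 "real n"] by simp
    have ss: "sqrt (real n) * sqrt (real n) = real n" by simp
    have tn: "t \<le> real n / 4"
    proof -
      have "4 * sqrt (real n) \<le> sqrt (real n) * sqrt (real n)" using s4 by (intro mult_right_mono) auto
      with ss \<open>t \<le> sqrt (real n)\<close> show ?thesis by linarith
    qed
    have tt: "t*t \<le> real n"
      using mult_mono[OF \<open>t \<le> sqrt (real n)\<close> \<open>t \<le> sqrt (real n)\<close>] t0 ss by simp
    have a: "real n * t^2 \<le> real n * real n" using mult_left_mono[OF tt, of "real n"] by (simp add: power2_eq_square)
    have b: "0 \<le> real n * t" using t0 by simp
    have c: "real n * (38/100*real n - 53761/10000) \<ge> 20 * (38/100*20 - 53761/10000)"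
      using True by (intro mult_mono) auto
    have "F \<ge> 38/100*(real n)^2 - 53761/10000*real n - 28"
      unfolding F_def using a b tn by (simp add: power2_eq_square)
    moreover have "38/100*(real n)^2 - 53761/10000*real n = real n * (38/100*real n - 53761/10000)"
      by (simp add: power2_eq_square algebra_simps)
    ultimately have "F \<ge> real n * (38/100*real n - 53761/10000) - 28" by simp
    from chain3[OF this c] tn show ?thesis by simp
  next
    case False
    then consider "n = 9" | "n = 10 \<or> n = 11" | "12 \<le> n \<and> n \<le> 19" using assms by linarith
    then show ?thesis
    proof cases
      case 1
      have "t \<le> 9/4" using mono[of 9] ln9 1 by simp
      from F1T[of "real n" t "9/4"] this t0 have "F \<ge> real n*(138/100*real n - 13761/10000 - (9/4 - 62/100)*(9/4)) - 16*(9/4) - 28"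
        unfolding F_def by simp
      with 1 \<open>t \<le> 9/4\<close> show ?thesis by simp
    next
      case 2
      have "t \<le> 5/2" using mono[of 11] ln11 2 by auto
      from F1T[of "real n" t "5/2"] this t0 have f: "F \<ge> real n*(138/100*real n - 13761/10000 - (5/2 - 62/100)*(5/2)) - 16*(5/2) - 28"
        unfolding F_def by simp
      have "real n*(138/100*real n - 13761/10000 - (5/2 - 62/100)*(5/2)) \<ge> 10 * (138/100*10 - 13761/10000 - (5/2 - 62/100)*(5/2))"
        using 2 by (intro mult_mono) auto
      with f 2 \<open>t \<le> 5/2\<close> show ?thesis by auto
    next
      case 3
      have "t \<le> 3" using mono[of 19] ln19 3 by auto
      from F1T[of "real n" t "3"] this t0 have f: "F \<ge> real n*(138/100*real n - 13761/10000 - (3 - 62/100)*3) - 16*3 - 28"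
        unfolding F_def by simp
      have "real n*(138/100*real n - 13761/10000 - (3 - 62/100)*3) \<ge> 12 * (138/100*12 - 13761/10000 - (3 - 62/100)*3)"
        using 3 by (intro mult_mono) auto
      with f 3 \<open>t \<le> 3\<close> show ?thesis by auto
    qed
  qed
  have "2*real n - 2*t - 10 - L - 69/100 \<ge> 0" using key L1 assms by linarith
  from diffL[OF _ L1 this] key show ?thesis unfolding t_def L_def F_def by simp
qed

lemma g_nonneg:
  fixes u D :: real and n :: nat
  assumes n9: "9 \<le> n" and u1: "1 \<le> u" and D1: "1 \<le> D" and Dm: "D \<le> real n - 2 * ln (real n) - 3"
  shows "u^2 + 2*u*(1 - D - ln u) + (real n - 2)*D - (real n - 1) \<ge> 0"
proof (cases "2*u \<le> real n - 2")
  case True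
  have "ln u \<le> (u - 1/u)/2" by (rule ln_le_half[OF u1])
  hence "2*u*ln u \<le> 2*u*((u - 1/u)/2)" using u1 by (intro mult_left_mono) auto
  also have "2*u*((u - 1/u)/2) = u*(u - 1/u)" by simp
  also have "u*(u - 1/u) = u^2 - 1" using u1 by (simp add: field_simps power2_eq_square)
  finally have a: "2*u*ln u \<le> u^2 - 1" .
  have b: "(D - 1)*(real n - 2 - 2*u) \<ge> 0" using True D1 by simp
  have "u^2 + 2*u*(1 - D - ln u) + (real n - 2)*D - (real n - 1) = (u^2 - 2*u*ln u - 1) + (D - 1)*(real n - 2 - 2*u)"
    by (simp add: algebra_simps)
  with a b show ?thesis by linarith
next
  case False
  define t where "t = ln (real n)"
  define L where "L = ln (2::real)"
  define Dx where "Dx = real n - 2*t - 3"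
  have npos: "real n > 4" using n9 by simp
  have b: "(Dx - D)*(2*u - (real n - 2)) \<ge> 0" using False Dm unfolding Dx_def t_def by simp
  have lnu: "ln u \<le> t - L + 2*u/real n - 1"
  proof -
    have "ln (2*u/real n) \<le> 2*u/real n - 1" using u1 npos by (intro ln_le_minus_one) simp
    moreover have "ln (2*u/real n) = L + ln u - t" unfolding L_def t_def using u1 npos
      by (simp add: ln_div ln_mult)
    ultimately show ?thesis by simp
  qed
  define B where "B = real n - t - 5 - L"
  define K where "K = (real n - 2)*Dx - (real n - 1)"
  have diff: "(real n - 4)*K - real n*B^2 \<ge> 0"
    using diff_nonneg[OF n9] unfolding B_def K_def Dx_def t_def L_def by simp
  have c: "u^2 + 2*u*(1 - Dx - ln u) + (real n - 2)*Dx - (real n - 1) \<ge> (1 - 4/real n)*u^2 - 2*u*B + K"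
  proof -
    have "2*u*(1 - Dx - ln u) \<ge> 2*u*(1 - Dx - (t - L + 2*u/real n - 1))"
      using lnu u1 by (intro mult_left_mono) auto
    moreover have "2*u*(1 - Dx - (t - L + 2*u/real n - 1)) = - 4/real n * u^2 - 2*u*B"
      unfolding B_def Dx_def using npos by (simp add: field_simps power2_eq_square)
    ultimately show ?thesis unfolding K_def by (simp add: algebra_simps)
  qed
  have d: "(1 - 4/real n)*u^2 - 2*u*B + K \<ge> 0"
  proof -
    have e: "(real n - 4) * (real n * ((1 - 4/real n)*u^2 - 2*u*B + K)) = ((real n - 4)*u - real n*B)^2 + real n*((real n - 4)*K - real n*B^2)"
      using npos by (simp add: field_simps power2_eq_square)
    have "0 \<le> ((real n - 4)*u - real n*B)^2 + real n*((real n - 4)*K - real n*B^2)"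
      using diff npos by simp
    hence "0 \<le> (real n - 4) * (real n * ((1 - 4/real n)*u^2 - 2*u*B + K))" using e by simp
    hence "0 \<le> real n * ((1 - 4/real n)*u^2 - 2*u*B + K)" using npos by (simp add: zero_le_mult_iff)
    thus ?thesis using npos by (simp add: zero_le_mult_iff)
  qed
  have "u^2 + 2*u*(1 - D - ln u) + (real n - 2)*D - (real n - 1)
      = (u^2 + 2*u*(1 - Dx - ln u) + (real n - 2)*Dx - (real n - 1)) + (Dx - D)*(2*u - (real n - 2))"
    by (simp add: algebra_simps)
  with b c d show ?thesis by linarith
qed




lemma n_ge_9:
  fixes n :: nat and D :: real
  assumes "1 < D" "D \<le> real n - 2 * ln (real n) - 3"
  shows "9 \<le> n"
proof (rule ccontr)
  assume "\<not> 9 \<le> n"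
  hence c: "n \<le> 4 \<or> n = 5 \<or> n = 6 \<or> n = 7 \<or> n = 8" by linarith
  have lt0: "2 * ln (real n) < real n - 4" using assms by linarith
  hence lt: "ln (real n) < (real n - 4)/2" by simp
  show False
  proof -
    { assume "n \<le> 4"
      have "ln (real n) \<ge> 0" by (cases "n = 0") auto
      moreover have "(real n - 4)/2 \<le> 0" using \<open>n \<le> 4\<close> by simp
      ultimately have False using lt by linarith }
    moreover { assume "n = 5" hence False using lt ln5 by simp }
    moreover { assume "n = 6" hence False using lt ln6 by simp }
    moreover { assume "n = 7" hence False using lt ln7 by simp }
    moreover { assume "n = 8" hence False using lt ln8 by simp }
    ultimately show False using c by blast
  qed
qed

lemma main_real:
  fixes x :: "nat \<Rightarrow> real" and n :: nat and D :: real
  assumes pos: "\<And>i. i < n \<Longrightarrow> 0 < x i"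
    and prod: "(\<Prod>i<n. x i) \<ge> 1"
    and sq: "(\<Sum>i<n. (x i)^2) \<ge> real n * D"
    and Dle: "D \<le> real n - 2 * ln (real n) - 3"
  shows "(\<Sum>i<n. x i) \<ge> real n - 1 + D"
proof -
  have lnsum: "(\<Sum>i<n. ln (x i)) \<ge> 0"
  proof -
    have "ln (\<Prod>i<n. x i) = (\<Sum>i<n. ln (x i))" using pos by (intro ln_prod) (auto simp: less_imp_neq[symmetric])
    moreover have "ln (\<Prod>i<n. x i) \<ge> 0" using prod by simp
    ultimately show ?thesis by simp
  qed
  show ?thesis
  proof (cases "D \<le> 1")
    case True
    have "(\<Sum>i<n. 1 + ln (x i)) \<le> (\<Sum>i<n. x i)"
      using pos ln_le_minus_one by (intro sum_mono) (simp add: algebra_simps)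
    moreover have "(\<Sum>i<n. 1 + ln (x i)) = real n + (\<Sum>i<n. ln (x i))" by (simp add: sum.distrib)
    ultimately show ?thesis using lnsum True by linarith
  next
    case False
    hence D1: "1 < D" by simp
    have n9: "9 \<le> n" by (rule n_ge_9[OF D1 Dle])
    define S where "S = {..<n}"
    have fin: "finite S" unfolding S_def by simp
    have "0 \<in> S" unfolding S_def using n9 by simp
    hence ne: "S \<noteq> {}" by auto
    define u where "u = Max (x ` S)"
    have "u \<in> x ` S" unfolding u_def using fin ne by (intro Max_in) auto
    then obtain k where kS: "k \<in> S" and uk: "u = x k" by auto
    have ule: "\<And>i. i \<in> S \<Longrightarrow> x i \<le> u" unfolding u_def using fin by (intro Max_ge) auto
    have posS: "\<And>i. i \<in> S \<Longrightarrow> 0 < x i" using pos unfolding S_def by auto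
    have upos: "0 < u" using posS kS uk by simp
    have u1: "1 \<le> u"
    proof -
      have "(\<Sum>i\<in>S. ln (x i)) \<le> (\<Sum>i\<in>S. ln u)"
        using posS ule upos by (intro sum_mono, subst ln_le_cancel_iff) auto
      hence "0 \<le> real n * ln u" using lnsum unfolding S_def by simp
      hence "0 \<le> ln u" using n9 by (simp add: zero_le_mult_iff)
      thus ?thesis using upos by simp
    qed
    define T where "T = S - {k}"
    have finT: "finite T" unfolding T_def using fin by simp
    have cardT: "card T = n - 1" unfolding T_def S_def using kS S_def by simp
    have split: "\<And>f. (\<Sum>i\<in>S. f i) = f k + (\<Sum>i\<in>T. f i)"
      unfolding T_def using fin kS by (simp add: sum.remove)
    define Y where "Y = (\<Sum>i\<in>T. x i)"
    define Q where "Q = (\<Sum>i\<in>T. (x i)^2)"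
    define Lg where "Lg = (\<Sum>i\<in>T. ln (x i))"
    have sumx: "(\<Sum>i<n. x i) = u + Y" using split[of x] uk unfolding Y_def S_def by simp
    have Lg: "Lg \<ge> - ln u" using split[of "\<lambda>i. ln (x i)"] lnsum uk unfolding Lg_def S_def by simp
    have Qb: "Q \<ge> real n * D - u^2" using split[of "\<lambda>i. (x i)^2"] sq uk unfolding Q_def S_def by simp
    have pw: "(\<Sum>i\<in>T. 1 + ln (x i) + (x i - 1)^2/(2*u)) \<le> Y"
      unfolding Y_def using posS ule u1 unfolding T_def by (intro sum_mono pointwise) auto
    have rn1: "real (n - 1) = real n - 1" using n9 by simp
    have sq_exp: "(\<Sum>i\<in>T. (x i - 1)^2) = Q - 2*Y + (real n - 1)"
      unfolding Q_def Y_def using cardT rn1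
      by (simp add: power2_eq_square algebra_simps sum.distrib sum_subtractf sum_distrib_left sum_distrib_right)
    have "(\<Sum>i\<in>T. 1 + ln (x i) + (x i - 1)^2/(2*u)) = (real n - 1) + Lg + (\<Sum>i\<in>T. (x i - 1)^2)/(2*u)"
      unfolding Lg_def using cardT rn1 by (simp add: sum.distrib sum_divide_distrib)
    with pw sq_exp have Y1: "(real n - 1) + Lg + (Q - 2*Y + (real n - 1))/(2*u) \<le> Y" by simp
    have Y2: "2*u*((real n - 1) + Lg) + (Q - 2*Y + (real n - 1)) \<le> 2*u*Y"
    proof -
      have "2*u*((real n - 1) + Lg + (Q - 2*Y + (real n - 1))/(2*u)) \<le> 2*u*Y"
        using Y1 upos by (intro mult_left_mono) auto
      moreover have "2*u*((real n - 1) + Lg + (Q - 2*Y + (real n - 1))/(2*u)) = 2*u*((real n - 1) + Lg) + (Q - 2*Y + (real n - 1))"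
        using upos by (simp add: field_simps)
      ultimately show ?thesis by simp
    qed
    have g: "u^2 + 2*u*(1 - D - ln u) + (real n - 2)*D - (real n - 1) \<ge> 0"
      by (rule g_nonneg[OF n9 u1 _ Dle]) (use D1 in simp)
    have lg2: "2*u*Lg \<ge> 2*u*(- ln u)" using Lg upos by (intro mult_left_mono) auto
    have "(2*u+2)*(real n - 1 + D - u) \<le> (2*u+2)*Y"
      using Y2 Qb g lg2 by (simp add: algebra_simps power2_eq_square)
    hence "real n - 1 + D - u \<le> Y" using upos by (simp add: mult_le_cancel_left_pos)
    thus ?thesis using sumx by simp
  qed
qed




definition tr :: "nat \<Rightarrow> 'a::comm_ring_1 mat \<Rightarrow> 'a" where
  "tr n M = (\<Sum>i<n. M $$ (i,i))"

lemma tr_comm: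
  assumes "X \<in> carrier_mat n n" "Y \<in> carrier_mat n n"
  shows "tr n (X * Y) = tr n (Y * X)"
proof -
  have "tr n (X * Y) = (\<Sum>i<n. \<Sum>k<n. X $$ (i,k) * Y $$ (k,i))"
    unfolding tr_def using assms by (intro sum.cong refl) (auto simp: scalar_prod_def atLeast0LessThan)
  also have "\<dots> = (\<Sum>k<n. \<Sum>i<n. Y $$ (k,i) * X $$ (i,k))"
    by (subst sum.swap) (simp add: mult.commute)
  also have "\<dots> = tr n (Y * X)"
    unfolding tr_def using assms by (intro sum.cong refl) (auto simp: scalar_prod_def atLeast0LessThan)
  finally show ?thesis .
qed

lemma tr_upper_sq:
  assumes "B \<in> carrier_mat n n" "upper_triangular B"
  shows "tr n (B * B) = (\<Sum>i<n. (B $$ (i,i))^2)"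
proof -
  have "tr n (B * B) = (\<Sum>i<n. \<Sum>k<n. B $$ (i,k) * B $$ (k,i))"
    unfolding tr_def using assms by (intro sum.cong refl) (auto simp: scalar_prod_def atLeast0LessThan)
  also have "\<dots> = (\<Sum>i<n. \<Sum>k<n. if k = i then (B $$ (i,i))^2 else 0)"
  proof (intro sum.cong refl)
    fix i k assume i: "i \<in> {..<n}" and k: "k \<in> {..<n}"
    show "B $$ (i,k) * B $$ (k,i) = (if k = i then (B $$ (i,i))^2 else 0)"
    proof (cases "k < i")
      case True thus ?thesis using assms i unfolding upper_triangular_def by auto
    next
      case False
      show ?thesis
      proof (cases "k = i")
        case True thus ?thesis by (simp add: power2_eq_square)
      next
        case F2: False
        with False have "i < k" by simp
        thus ?thesis using assms k F2 unfolding upper_triangular_def by auto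
      qed
    qed
  qed
  also have "\<dots> = (\<Sum>i<n. (B $$ (i,i))^2)"
    by (intro sum.cong refl) (simp add: sum.delta')
  finally show ?thesis .
qed

lemma tr_similar_sq:
  assumes "similar_mat_wit A B P Q" "A \<in> carrier_mat n n"
  shows "tr n (A * A) = tr n (B * B)"
proof -
  from assms have c: "B \<in> carrier_mat n n" "P \<in> carrier_mat n n" "Q \<in> carrier_mat n n"
    and PQ: "P * Q = 1\<^sub>m n" and QP: "Q * P = 1\<^sub>m n" and A: "A = P * B * Q"
    unfolding similar_mat_wit_def Let_def by auto
  have "A * A = P * (B * B * Q)"
  proof -
    have "A * A = P * B * Q * (P * B * Q)" using A by simp
    also have "\<dots> = P * (B * (Q * P) * B * Q)" using c
      by (simp add: assoc_mult_mat[of _ n n _ n _ n])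
    also have "\<dots> = P * (B * B * Q)" using c QP by simp
    finally show ?thesis .
  qed
  have BBQ: "B * B * Q \<in> carrier_mat n n" using c by simp
  have "tr n (A * A) = tr n (B * B * Q * P)"
    unfolding \<open>A * A = P * (B * B * Q)\<close> by (rule tr_comm[OF c(2) BBQ])
  also have "B * B * Q * P = B * B * (Q * P)" using c by (intro assoc_mult_mat) auto
  also have "\<dots> = B * B" using c QP by simp
  finally show ?thesis .
qed




lemma adj_carrier: "adj_matrix n E \<in> carrier_mat n n"
  unfolding adj_matrix_def by simp

lemma adj_int: "adj_matrix n E = map_mat real_of_int (mat n n (\<lambda>(i,j). if E i j then 1 else 0))"
  unfolding adj_matrix_def by (intro eq_matI) auto

lemma det_ge1: assumes "det (adj_matrix n E) \<noteq> 0" shows "\<bar>det (adj_matrix n E)\<bar> \<ge> 1"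
proof -
  define M :: "int mat" where "M = mat n n (\<lambda>(i,j). if E i j then 1 else 0)"
  have d: "det (adj_matrix n E) = real_of_int (det M)" unfolding adj_int M_def by simp
  with assms have "det M \<noteq> 0" by auto
  hence "\<bar>det M\<bar> \<ge> 1" by linarith
  thus ?thesis unfolding d by linarith
qed

lemma count_edges:
  assumes sg: "simple_graph n E"
  shows "card {(i,k). i<n \<and> k<n \<and> E i k} = 2 * num_edges n E"
proof -
  define U where "U = {(i,j). i<j \<and> j<n \<and> E i j}"
  define U' where "U' = {(i,j). j<i \<and> i<n \<and> E i j}"
  have sym: "\<And>i j. i<n \<Longrightarrow> j<n \<Longrightarrow> E i j = E j i" and irr: "\<And>i. i<n \<Longrightarrow> \<not> E i i"
    using sg unfolding simple_graph_def by auto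
  have F: "{(i,k). i<n \<and> k<n \<and> E i k} = U \<union> U'"
    unfolding U_def U'_def using irr by (auto, metis linorder_neqE_nat)
  have finU: "finite U" unfolding U_def by (rule finite_subset[of _ "{..<n} \<times> {..<n}"]) auto
  have finU': "finite U'" unfolding U'_def by (rule finite_subset[of _ "{..<n} \<times> {..<n}"]) auto
  have disj: "U \<inter> U' = {}" unfolding U_def U'_def by auto
  have img: "U' = (\<lambda>(i,j). (j,i)) ` U"
    unfolding U_def U'_def using sym by (auto simp: image_iff)
  have inj: "inj_on (\<lambda>(i,j). (j,i)) U" by (auto simp: inj_on_def)
  have "card U' = card U" unfolding img using inj by (simp add: card_image)
  hence "card (U \<union> U') = 2 * card U" using card_Un_disjoint[OF finU finU' disj] by simp
  thus ?thesis unfolding F num_edges_def U_def by simp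
qed

lemma tr_adj:
  assumes sg: "simple_graph n E"
  shows "tr n (map_mat complex_of_real (adj_matrix n E) * map_mat complex_of_real (adj_matrix n E))
     = of_nat (2 * num_edges n E)"
proof -
  let ?A = "map_mat complex_of_real (adj_matrix n E)"
  have sym: "\<And>i j. i<n \<Longrightarrow> j<n \<Longrightarrow> E i j = E j i"
    using sg unfolding simple_graph_def by auto
  have "tr n (?A * ?A) = (\<Sum>i<n. \<Sum>k<n. (if E i k then 1 else 0 :: complex))"
    unfolding tr_def
  proof (intro sum.cong refl)
    fix i assume i: "i \<in> {..<n}"
    have "(?A * ?A) $$ (i,i) = (\<Sum>k<n. ?A $$ (i,k) * ?A $$ (k,i))"
      using i by (simp add: adj_matrix_def scalar_prod_def atLeast0LessThan)
    also have "\<dots> = (\<Sum>k<n. (if E i k then 1 else 0 :: complex))"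
      using i sym by (intro sum.cong refl) (auto simp: adj_matrix_def)
    finally show "(?A * ?A) $$ (i,i) = (\<Sum>k<n. (if E i k then 1 else 0 :: complex))" .
  qed
  also have "\<dots> = (\<Sum>p\<in>{..<n} \<times> {..<n}. (if E (fst p) (snd p) then 1 else 0 :: complex))"
    by (simp add: sum.cartesian_product case_prod_beta)
  also have "\<dots> = (\<Sum>p\<in>{p\<in>{..<n} \<times> {..<n}. E (fst p) (snd p)}. 1)"
    by (rule sum.inter_filter[symmetric]) simp
  also have "{p\<in>{..<n} \<times> {..<n}. E (fst p) (snd p)} = {(i,k). i<n \<and> k<n \<and> E i k}" by auto
  also have "(\<Sum>p\<in>{(i,k). i<n \<and> k<n \<and> E i k}. (1::complex)) = of_nat (card {(i,k). i<n \<and> k<n \<and> E i k})"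
    by simp
  finally show ?thesis using count_edges[OF sg] by simp
qed




lemma cmod_sq_ge_Re: "Re (z^2) \<le> (cmod z)^2"
proof -
  have "Re (z^2) = (Re z)^2 - (Im z)^2" by (simp add: power2_eq_square)
  moreover have "(cmod z)^2 = (Re z)^2 + (Im z)^2" by (rule cmod_power2)
  moreover have "(Im z)^2 \<ge> 0" by simp
  ultimately show ?thesis by linarith
qed

theorem theorem3p3:
  fixes n :: nat and E :: "nat \<Rightarrow> nat \<Rightarrow> bool"
  assumes "simple_graph n E"
    and "det (adj_matrix n E) \<noteq> 0"
    and "avg_degree n E \<le> real n - 2 * ln (real n) - 3"
    and "\<not> graph_iso n E 4 P4_edges"
    and "\<not> graph_iso n E 4 paw_edges"
  shows "graph_energy n E \<ge> real n - 1 + avg_degree n E"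
proof -
  note sg = assms(1)
  define A where "A = adj_matrix n E"
  define AC where "AC = map_mat complex_of_real A"
  have Ac: "A \<in> carrier_mat n n" unfolding A_def by (rule adj_carrier)
  have AC: "AC \<in> carrier_mat n n" unfolding AC_def using Ac by simp
  obtain es where cp: "char_poly AC = (\<Prod>a\<leftarrow>es. [:- a, 1:])" and len: "length es = n"
    using char_poly_factorized[OF AC] by blast
  obtain B P Q where sd: "schur_decomposition AC es = (B,P,Q)" by (cases "schur_decomposition AC es") auto
  from schur_decomposition[OF AC cp sd] have sim: "similar_mat_wit AC B P Q"
    and ut: "upper_triangular B" and dg: "diag_mat B = es" by auto
  from sim AC have Bc: "B \<in> carrier_mat n n" and Pc: "P \<in> carrier_mat n n" and Qc: "Q \<in> carrier_mat n n"
    and PQ: "P * Q = 1\<^sub>m n" and ACeq: "AC = P * B * Q"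
    unfolding similar_mat_wit_def Let_def by auto
  have diag: "\<And>i. i < n \<Longrightarrow> B $$ (i,i) = es ! i"
  proof -
    fix i assume i: "i < n"
    have "es ! i = diag_mat B ! i" using dg by simp
    also have "\<dots> = B $$ (i,i)" using i Bc unfolding diag_mat_def by simp
    finally show "B $$ (i,i) = es ! i" by simp
  qed
  have pr: "proots (\<Prod>a\<leftarrow>xs. [:- a, 1:]) = mset xs" for xs :: "complex list"
  proof (induction xs)
    case (Cons a xs)
    have nz: "(\<Prod>a\<leftarrow>xs. [:- a, 1:]) \<noteq> 0" by (auto simp: prod_list_zero_iff)
    have nz2: "[:- a, 1:] \<noteq> (0 :: complex poly)" by simp
    have "(\<Prod>a\<leftarrow>a # xs. [:- a, 1:]) = [:- a, 1:] * (\<Prod>a\<leftarrow>xs. [:- a, 1:])" by simp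
    hence "proots (\<Prod>a\<leftarrow>a # xs. [:- a, 1:]) = proots [:- a, 1:] + proots (\<Prod>a\<leftarrow>xs. [:- a, 1:])"
      using proots_mult[OF nz2 nz] by simp
    also have "proots [:- a, 1:] = {#a#}" using proots_linear_factor[of "-a"] by simp
    finally show ?case using Cons by simp
  qed simp
  have eig: "eigenvalues_mset A = mset es"
    unfolding eigenvalues_mset_def AC_def[symmetric] cp by (rule pr)
  have energy: "graph_energy n E = (\<Sum>i<n. cmod (es ! i))"
  proof -
    have "graph_energy n E = sum_list (map cmod es)"
      unfolding graph_energy_def A_def[symmetric] eig mset_map[symmetric] sum_mset_sum_list ..
    also have "\<dots> = (\<Sum>i<n. cmod (es ! i))"
      using len by (simp add: sum_list_sum_nth atLeast0LessThan)
    finally show ?thesis .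
  qed
  have detAC: "det AC = (\<Prod>i<n. es ! i)"
  proof -
    have "det AC = det P * det B * det Q" using ACeq Pc Bc Qc by (simp add: det_mult[of _ n])
    also have "det P * det Q = 1" using det_mult[OF Pc Qc] PQ by simp
    hence "det P * det B * det Q = det B" by (simp add: algebra_simps)
    also have "det B = prod_list (diag_mat B)" by (rule det_upper_triangular[OF ut Bc])
    also have "\<dots> = (\<Prod>i<n. es ! i)" unfolding prod_list_diag_prod using Bc diag by (auto simp: atLeast0LessThan intro!: prod.cong)
    finally show ?thesis .
  qed
  have detA: "det AC = complex_of_real (det A)" unfolding AC_def by simp
  have prod: "(\<Prod>i<n. cmod (es ! i)) \<ge> 1"
  proof -
    have "(\<Prod>i<n. cmod (es ! i)) = cmod (\<Prod>i<n. es ! i)" by (simp add: prod_norm)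
    also have "\<dots> = cmod (complex_of_real (det A))" using detAC detA by simp
    also have "\<dots> = \<bar>det A\<bar>" by (rule norm_of_real)
    finally show ?thesis using det_ge1[OF assms(2)] unfolding A_def by simp
  qed
  have pos: "\<And>i. i < n \<Longrightarrow> 0 < cmod (es ! i)"
  proof (rule ccontr)
    fix i assume i: "i < n" and "\<not> 0 < cmod (es ! i)"
    hence "cmod (es ! i) = 0" by simp
    hence "(\<Prod>i<n. cmod (es ! i)) = 0" using i by (intro prod_zero) auto
    with prod show False by simp
  qed
  have trB: "tr n (AC * AC) = (\<Sum>i<n. (es ! i)^2)"
    using tr_similar_sq[OF sim AC] tr_upper_sq[OF Bc ut] diag by simp
  have trA: "tr n (AC * AC) = of_nat (2 * num_edges n E)"
    unfolding AC_def A_def by (rule tr_adj[OF sg])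
  have sq: "(\<Sum>i<n. (cmod (es ! i))^2) \<ge> real n * avg_degree n E"
  proof -
    have "real (2 * num_edges n E) = Re (\<Sum>i<n. (es ! i)^2)" using trA trB by simp
    also have "\<dots> = (\<Sum>i<n. Re ((es ! i)^2))" by simp
    also have "\<dots> \<le> (\<Sum>i<n. (cmod (es ! i))^2)" by (intro sum_mono cmod_sq_ge_Re)
    finally have a: "real (2 * num_edges n E) \<le> (\<Sum>i<n. (cmod (es ! i))^2)" .
    have "real n * avg_degree n E \<le> real (2 * num_edges n E)"
      unfolding avg_degree_def by (cases "n = 0") auto
    with a show ?thesis by linarith
  qed
  have "(\<Sum>i<n. cmod (es ! i)) \<ge> real n - 1 + avg_degree n E"
    by (rule main_real[OF pos prod sq assms(3)])
  thus ?thesis using energy by simp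
qed


end
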